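(* Let $T$ be a tree with edges $e_1,\ldots,e_m$. For $k\neq l$, the forest $T-\{e_k,e_l\}$ has three connected components, exactly one of which contains an end-vertex of both $e_k$ and $e_l$; let $m_1(e_k,e_l)$ and $m_2(e_k,e_l)$ be the numbers of edges in the other two components. Then $$WW_e(T)=2W_e(T)+\sum_{k=1}^{m-1}\sum_{l=k+1}^{m}m_1(e_k,e_l)\,m_2(e_k,e_l)-\binom{m}{2}.$$
   Context: The distance $d(e,f)$ between edges is the distance between $e$ and $f$ as vertices of the line graph. The edge-Wiener index is $W_e(G)=\sum_{\{e,f\}\subseteq E(G)}d(e,f)$ and the edge-hyper-Wiener index is $WW_e(G)=\frac12\sum_{\{e,f\}\subseteq E(G)}d(e,f)+\frac12\sum_{\{e,f\}\subseteq E(G)}d(e,f)^2$, sums over unordered pairs of distinct edges. *)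

theory Defs
  imports Complex_Main
begin

definition simple_graph :: "'a set \<Rightarrow> 'a set set \<Rightarrow> bool" where
  "simple_graph V E \<longleftrightarrow> finite V \<and> (\<forall>e\<in>E. \<exists>u v. u \<in> V \<and> v \<in> V \<and> u \<noteq> v \<and> e = {u, v})"

definition adj_rel :: "'a set set \<Rightarrow> ('a \<times> 'a) set" where
  "adj_rel E = {(u, v). {u, v} \<in> E}"

definition connected_graph :: "'a set \<Rightarrow> 'a set set \<Rightarrow> bool" where
  "connected_graph V E \<longleftrightarrow> (\<forall>u\<in>V. \<forall>v\<in>V. (u, v) \<in> (adj_rel E)\<^sup>*)"

definition is_cycle :: "'a set set \<Rightarrow> 'a list \<Rightarrow> bool" where
  "is_cycle E vs \<longleftrightarrow> length vs \<ge> 3 \<and> distinct vs \<and>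
     (\<forall>i < length vs. {vs ! i, vs ! ((i + 1) mod length vs)} \<in> E)"

definition acyclic_graph :: "'a set set \<Rightarrow> bool" where
  "acyclic_graph E \<longleftrightarrow> (\<nexists>vs. is_cycle E vs)"

definition tree :: "'a set \<Rightarrow> 'a set set \<Rightarrow> bool" where
  "tree V E \<longleftrightarrow> simple_graph V E \<and> V \<noteq> {} \<and> connected_graph V E \<and> acyclic_graph E"

definition line_adj :: "'a set set \<Rightarrow> ('a set \<times> 'a set) set" where
  "line_adj E = {(e, f). e \<in> E \<and> f \<in> E \<and> e \<noteq> f \<and> e \<inter> f \<noteq> {}}"

definition edge_dist :: "'a set set \<Rightarrow> 'a set \<Rightarrow> 'a set \<Rightarrow> nat" where
  "edge_dist E e f = (LEAST n. (e, f) \<in> (line_adj E) ^^ n)"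

(* sums over unordered pairs {e,f} of distinct edges = half the sums over ordered pairs *)
definition edge_pairs :: "'a set set \<Rightarrow> ('a set \<times> 'a set) set" where
  "edge_pairs E = {(e, f). e \<in> E \<and> f \<in> E \<and> e \<noteq> f}"

definition edge_wiener :: "'a set set \<Rightarrow> real" where
  "edge_wiener E = (\<Sum>(e, f)\<in>edge_pairs E. real (edge_dist E e f)) / 2"

definition edge_hyper_wiener :: "'a set set \<Rightarrow> real" where
  "edge_hyper_wiener E =
     (1/2) * ((\<Sum>(e, f)\<in>edge_pairs E. real (edge_dist E e f)) / 2)
   + (1/2) * ((\<Sum>(e, f)\<in>edge_pairs E. real (edge_dist E e f) ^ 2) / 2)"

definition components :: "'a set \<Rightarrow> 'a set set \<Rightarrow> 'a set set" where
  "components V E = {{v \<in> V. (u, v) \<in> (adj_rel E)\<^sup>*} | u. u \<in> V}"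

definition edges_in :: "'a set set \<Rightarrow> 'a set \<Rightarrow> nat" where
  "edges_in E C = card {g \<in> E. g \<subseteq> C}"

definition middle_components :: "'a set \<Rightarrow> 'a set set \<Rightarrow> 'a set \<Rightarrow> 'a set \<Rightarrow> 'a set set" where
  "middle_components V E e f =
     {C \<in> components V (E - {e, f}). C \<inter> e \<noteq> {} \<and> C \<inter> f \<noteq> {}}"

definition m12 :: "'a set \<Rightarrow> 'a set set \<Rightarrow> 'a set \<Rightarrow> 'a set \<Rightarrow> nat" where
  "m12 V E e f =
     (\<Prod>C\<in>components V (E - {e, f}) - middle_components V E e f. edges_in (E - {e, f}) C)"

end

theory Submission
  imports Defs
begin

definition conn :: "'a set set \<Rightarrow> 'a \<Rightarrow> 'a \<Rightarrow> bool" where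
  "conn F x y \<longleftrightarrow> (x, y) \<in> (adj_rel F)\<^sup>*"

lemma conn_refl[simp]: "conn F x x" by (simp add: conn_def)

lemma conn_trans: "conn F x y \<Longrightarrow> conn F y z \<Longrightarrow> conn F x z"
  unfolding conn_def by (rule rtrancl_trans)

lemma adj_rel_sym: "(x,y) \<in> adj_rel F \<Longrightarrow> (y,x) \<in> adj_rel F"
  by (simp add: adj_rel_def insert_commute)

lemma conn_sym: "conn F x y \<Longrightarrow> conn F y x"
  unfolding conn_def
proof (induction rule: rtrancl_induct)
  case base then show ?case by simp
next
  case (step y z)
  then show ?case by (meson adj_rel_sym converse_rtrancl_into_rtrancl)
qed

lemma conn_edge: "{x,y} \<in> F \<Longrightarrow> conn F x y"
  unfolding conn_def adj_rel_def by (rule r_into_rtrancl) simp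

lemma conn_mono: "F \<subseteq> G \<Longrightarrow> conn F x y \<Longrightarrow> conn G x y"
proof -
  assume "F \<subseteq> G"
  hence "adj_rel F \<subseteq> adj_rel G" unfolding adj_rel_def by auto
  thus "conn F x y \<Longrightarrow> conn G x y" unfolding conn_def using rtrancl_mono by blast
qed

lemma conn_split:
  assumes "conn F x y"
  shows "conn (F - {g}) x y \<or> (\<exists>a b. g = {a,b} \<and> conn (F - {g}) x a \<and> conn (F - {g}) b y)"
  using assms unfolding conn_def[of F]
proof (induction rule: rtrancl_induct)
  case base then show ?case by simp
next
  case (step y z)
  hence yz: "{y,z} \<in> F" by (simp add: adj_rel_def)
  show ?case
  proof (cases "{y,z} = g")
    case False
    hence e: "conn (F - {g}) y z" using yz by (intro conn_edge) auto
    from step.IH show ?thesis using conn_trans[OF _ e] by blast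
  next
    case True
    from step.IH show ?thesis
    proof
      assume "conn (F - {g}) x y"
      then show ?thesis using True by (intro disjI2 exI[of _ y] exI[of _ z]) auto
    next
      assume "\<exists>a b. g = {a,b} \<and> conn (F - {g}) x a \<and> conn (F - {g}) b y"
      then obtain a b where ab: "g = {a,b}" "conn (F - {g}) x a" "conn (F - {g}) b y" by blast
      have "z \<in> g" using True by auto
      hence "z = a \<or> z = b" using ab(1) by auto
      then show ?thesis
      proof
        assume "z = a" then show ?thesis using ab by auto
      next
        assume "z = b" then show ?thesis using ab by (intro disjI2 exI[of _ a] exI[of _ b]) auto
      qed
    qed
  qed
qed

definition is_path :: "'a set set \<Rightarrow> 'a list \<Rightarrow> bool" where
 "is_path F xs \<longleftrightarrow> xs \<noteq> [] \<and> distinct xs \<and> (\<forall>i. Suc i < length xs \<longrightarrow> {xs!i, xs!Suc i} \<in> F)"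

lemma conn_path:
  assumes "conn F x y"
  shows "\<exists>xs. is_path F xs \<and> hd xs = x \<and> last xs = y"
  using assms unfolding conn_def
proof (induction rule: rtrancl_induct)
  case base
  show ?case by (intro exI[of _ "[x]"]) (simp add: is_path_def)
next
  case (step y z)
  then obtain xs where xs: "is_path F xs" "hd xs = x" "last xs = y" by blast
  have yz: "{y,z} \<in> F" using step(2) by (simp add: adj_rel_def)
  show ?case
  proof (cases "z \<in> set xs")
    case True
    then obtain i where i: "i < length xs" "xs ! i = z" by (metis in_set_conv_nth)
    let ?ys = "take (Suc i) xs"
    have "is_path F ?ys" using xs(1) i unfolding is_path_def by auto
    moreover have "hd ?ys = x" using xs i by (simp add: hd_take is_path_def)
    moreover have "last ?ys = z" using i by (simp add: take_Suc_conv_app_nth)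
    ultimately show ?thesis by blast
  next
    case False
    let ?ys = "xs @ [z]"
    have "is_path F ?ys"
      unfolding is_path_def
    proof (intro conjI allI impI)
      show "?ys \<noteq> []" by simp
      show "distinct ?ys" using xs(1) False by (simp add: is_path_def)
      fix j assume j: "Suc j < length ?ys"
      show "{?ys!j, ?ys!Suc j} \<in> F"
      proof (cases "Suc j < length xs")
        case True then show ?thesis using xs(1) by (simp add: is_path_def nth_append)
      next
        case False
        hence jj: "Suc j = length xs" using j by auto
        have "xs ! j = y" using xs jj by (metis diff_Suc_1 last_conv_nth is_path_def)
        then show ?thesis using jj yz by (simp add: nth_append)
      qed
    qed
    moreover have "hd ?ys = x" using xs by (simp add: is_path_def)
    ultimately show ?thesis by auto
  qed
qed

lemma tree_edge: "tree V E \<Longrightarrow> e \<in> E \<Longrightarrow> \<exists>u v. u \<in> V \<and> v \<in> V \<and> u \<noteq> v \<and> e = {u,v}"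
  by (auto simp: tree_def simple_graph_def)

lemma tree_edge_sub: "tree V E \<Longrightarrow> e \<in> E \<Longrightarrow> e \<subseteq> V"
  using tree_edge by fastforce

lemma cut_disc:
  assumes T: "tree V E" and g: "{p,q} \<in> E"
  shows "\<not> conn (E - {{p,q}}) p q"
proof
  assume c: "conn (E - {{p,q}}) p q"
  have pq: "p \<noteq> q" using tree_edge[OF T g] by (auto simp: doubleton_eq_iff)
  obtain xs where xs: "is_path (E - {{p,q}}) xs" "hd xs = p" "last xs = q"
    using conn_path[OF c] by blast
  have ne: "xs \<noteq> []" using xs by (simp add: is_path_def)
  have h0: "xs ! 0 = p" using xs ne by (simp add: hd_conv_nth)
  have hl: "xs ! (length xs - 1) = q" using xs ne by (simp add: last_conv_nth)
  have len: "length xs \<ge> 2"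
  proof (rule ccontr)
    assume "\<not> ?thesis"
    hence "length xs = 1" using ne length_greater_0_conv[of xs] by linarith
    thus False using h0 hl pq by simp
  qed
  show False
  proof (cases "length xs = 2")
    case True
    then have "{xs!0, xs!Suc 0} \<in> E - {{p,q}}" using xs(1) by (simp add: is_path_def)
    moreover have "xs ! Suc 0 = q" using hl True by simp
    ultimately show False using h0 by simp
  next
    case False
    have "is_cycle E xs" unfolding is_cycle_def
    proof (intro conjI allI impI)
      show "3 \<le> length xs" using len False by simp
      show "distinct xs" using xs by (simp add: is_path_def)
      fix i assume i: "i < length xs"
      show "{xs ! i, xs ! ((i + 1) mod length xs)} \<in> E"
      proof (cases "Suc i < length xs")
        case True
        then show ?thesis using xs(1) by (auto simp: is_path_def)
      next
        case False
        hence "i = length xs - 1" using i by simp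
        moreover have "(i + 1) mod length xs = 0"
        proof -
          have "i + 1 = length xs" using i False by simp
          thus ?thesis by simp
        qed
        ultimately show ?thesis using h0 hl g by (simp add: insert_commute)
      qed
    qed
    thus False using T by (simp add: tree_def acyclic_graph_def)
  qed
qed

lemma cut_cover:
  assumes T: "tree V E" and g: "{p,q} \<in> E" and x: "x \<in> V"
  shows "conn (E - {{p,q}}) p x \<or> conn (E - {{p,q}}) q x"
proof -
  have "p \<in> V" using tree_edge_sub[OF T g] by auto
  hence "conn E p x" using T x by (simp add: tree_def connected_graph_def conn_def)
  from conn_split[OF this, of "{p,q}"] show ?thesis by (auto simp: doubleton_eq_iff)
qed

lemma edge_conn_all:
  assumes T: "tree V E" and F: "F \<subseteq> E" and e: "e \<in> F" and x: "x \<in> e" and y: "y \<in> e"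
  shows "conn F x y"
proof -
  obtain u v where "e = {u,v}" using tree_edge[OF T] e F by blast
  then show ?thesis using x y e conn_edge[of u v F] conn_sym[of F u v] by auto
qed

lemma orient:
  assumes T: "tree V E" and g: "g \<in> E" and h: "h \<in> E" and gh: "g \<noteq> h"
  shows "\<exists>p q r s. g = {p,q} \<and> h = {r,s} \<and> p \<in> V \<and> q \<in> V \<and> r \<in> V \<and> s \<in> V \<and>
     conn (E - {g,h}) q r \<and> \<not> conn (E - {g}) p q \<and> \<not> conn (E - {h}) r s \<and>
     (\<forall>x\<in>V. conn (E - {g,h}) p x \<or> conn (E - {g,h}) q x \<or> conn (E - {g,h}) s x)"
proof -
  obtain a b where ab: "a \<in> V" "b \<in> V" "g = {a,b}" using tree_edge[OF T g] by blast
  obtain c d where cd: "c \<in> V" "d \<in> V" "h = {c,d}" using tree_edge[OF T h] by blast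
  have "conn E a c" using T ab cd by (simp add: tree_def connected_graph_def conn_def)
  from conn_split[OF this, of g]
  have "\<exists>p q. g = {p,q} \<and> conn (E - {g}) q c"
  proof (elim disjE)
    assume "conn (E - {g}) a c" then show ?thesis
      apply - apply (rule exI[of _ b], rule exI[of _ a]) using ab by auto
  next
    assume "\<exists>x y. g = {x, y} \<and> conn (E - {g}) a x \<and> conn (E - {g}) y c"
    then show ?thesis by blast
  qed
  then obtain p q where pq: "g = {p,q}" "conn (E - {g}) q c" by blast
  from conn_split[OF pq(2), of h]
  have "\<exists>r s. h = {r,s} \<and> conn (E - {g} - {h}) q r"
  proof (elim disjE)
    assume "conn (E - {g} - {h}) q c" then show ?thesis
      apply - apply (rule exI[of _ c], rule exI[of _ d]) using cd by auto
  next
    assume "\<exists>x y. h = {x, y} \<and> conn (E - {g} - {h}) q x \<and> conn (E - {g} - {h}) y c"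
    then show ?thesis by blast
  qed
  then obtain r s where rs: "h = {r,s}" "conn (E - {g} - {h}) q r" by blast
  have EE: "E - {g} - {h} = E - {g,h}" by auto
  have V: "p \<in> V" "q \<in> V" "r \<in> V" "s \<in> V"
    using tree_edge_sub[OF T g] tree_edge_sub[OF T h] pq rs by auto
  have c1: "\<not> conn (E - {g}) p q" using cut_disc[OF T] g pq by auto
  have c2: "\<not> conn (E - {h}) r s" using cut_disc[OF T] h rs by auto
  have hg: "h \<in> E - {g}" using h gh by auto
  have cov: "conn (E - {g,h}) p x \<or> conn (E - {g,h}) q x \<or> conn (E - {g,h}) s x" if x: "x \<in> V" for x
  proof -
    have *: "conn (E - {g,h}) y x \<or> conn (E - {g,h}) q x \<or> conn (E - {g,h}) s x"
      if "conn (E - {g}) y x" for y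
    proof -
      from conn_split[OF that, of h]
      show ?thesis
      proof (elim disjE)
        assume "conn (E - {g} - {h}) y x" then show ?thesis using EE by simp
      next
        assume "\<exists>a b. h = {a, b} \<and> conn (E - {g} - {h}) y a \<and> conn (E - {g} - {h}) b x"
        then obtain a' b' where "h = {a',b'}" "conn (E - {g,h}) b' x" using EE by auto
        hence "b' = r \<or> b' = s" using rs by (auto simp: doubleton_eq_iff)
        then show ?thesis using \<open>conn (E - {g,h}) b' x\<close> rs(2) EE conn_trans by metis
      qed
    qed
    from cut_cover[OF T _ x, of p q] g pq
    have "conn (E - {g}) p x \<or> conn (E - {g}) q x" by simp
    then show ?thesis using *[of p] *[of q] by blast
  qed
  show ?thesis
    apply (rule exI[of _ p], rule exI[of _ q], rule exI[of _ r], rule exI[of _ s])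
    using pq rs V c1 c2 cov EE by auto
qed

lemma orient_full:
  assumes T: "tree V E" and g: "g \<in> E" and h: "h \<in> E" and gh: "g \<noteq> h"
  shows "\<exists>p q r s. g = {p,q} \<and> h = {r,s} \<and> p \<in> V \<and> q \<in> V \<and> r \<in> V \<and> s \<in> V \<and>
     conn (E - {g,h}) q r \<and> \<not> conn (E - {g}) p q \<and> \<not> conn (E - {h}) r s \<and>
     (\<forall>x\<in>V. conn (E - {g,h}) p x \<or> conn (E - {g,h}) q x \<or> conn (E - {g,h}) s x) \<and>
     \<not> conn (E - {g,h}) p q \<and> \<not> conn (E - {g,h}) r s \<and> \<not> conn (E - {g,h}) p s \<and>
     \<not> conn (E - {g,h}) q s"
proof -
  obtain p q r s where o: "g = {p,q}" "h = {r,s}" "p \<in> V" "q \<in> V" "r \<in> V" "s \<in> V"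
     "conn (E - {g,h}) q r" "\<not> conn (E - {g}) p q" "\<not> conn (E - {h}) r s"
     "\<forall>x\<in>V. conn (E - {g,h}) p x \<or> conn (E - {g,h}) q x \<or> conn (E - {g,h}) s x"
    using orient[OF assms] by blast
  have s1: "E - {g,h} \<subseteq> E - {g}" "E - {g,h} \<subseteq> E - {h}" by auto
  have n1: "\<not> conn (E - {g,h}) p q" using o(8) conn_mono[OF s1(1)] by blast
  have n2: "\<not> conn (E - {g,h}) r s" using o(9) conn_mono[OF s1(2)] by blast
  have hE: "{r,s} \<in> E - {g}" using h gh o by auto
  have gE: "{p,q} \<in> E - {h}" using g gh o by auto
  have n3: "\<not> conn (E - {g,h}) p s"
  proof
    assume "conn (E - {g,h}) p s"
    hence "conn (E - {g}) p s" using conn_mono[OF s1(1)] by blast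
    moreover have "conn (E - {g}) s r" using conn_sym[OF conn_edge[OF hE]] .
    moreover have "conn (E - {g}) r q" using conn_sym[OF conn_mono[OF s1(1) o(7)]] .
    ultimately show False using o(8) conn_trans by metis
  qed
  have n4: "\<not> conn (E - {g,h}) q s"
  proof
    assume "conn (E - {g,h}) q s"
    hence "conn (E - {h}) q s" using conn_mono[OF s1(2)] by blast
    moreover have "conn (E - {h}) r q" using conn_sym[OF conn_mono[OF s1(2) o(7)]] .
    ultimately show False using o(9) conn_trans by metis
  qed
  show ?thesis
    apply (rule exI[of _ p], rule exI[of _ q], rule exI[of _ r], rule exI[of _ s])
    using o n1 n2 n3 n4 by auto
qed

definition cls :: "'a set \<Rightarrow> 'a set set \<Rightarrow> 'a \<Rightarrow> 'a set" where
  "cls V F u = {v \<in> V. conn F u v}"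

lemma components_cls: "components V F = {cls V F u | u. u \<in> V}"
  by (simp add: components_def cls_def conn_def)

lemma cls_eq: "conn F a b \<Longrightarrow> cls V F a = cls V F b"
proof -
  assume ab: "conn F a b"
  have "conn F a v \<longleftrightarrow> conn F b v" for v
    using ab conn_sym[OF ab] conn_trans[of F a b v] conn_trans[of F b a v] by blast
  thus ?thesis unfolding cls_def by simp
qed

lemma three_struct:
  assumes T: "tree V E" and g: "g \<in> E" and h: "h \<in> E" and gh: "g \<noteq> h"
  shows "\<exists>p q r s. g = {p,q} \<and> h = {r,s} \<and> p \<in> V \<and> q \<in> V \<and> r \<in> V \<and> s \<in> V \<and>
     conn (E - {g,h}) q r \<and> \<not> conn (E - {g}) p q \<and> \<not> conn (E - {h}) r s \<and>
     (\<forall>x\<in>V. conn (E - {g,h}) p x \<or> conn (E - {g,h}) q x \<or> conn (E - {g,h}) s x) \<and>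
     \<not> conn (E - {g,h}) p q \<and> \<not> conn (E - {g,h}) r s \<and> \<not> conn (E - {g,h}) p s \<and>
     \<not> conn (E - {g,h}) q s \<and>
     card (components V (E - {g,h})) = 3 \<and> card (middle_components V E g h) = 1 \<and>
     m12 V E g h = edges_in (E - {g,h}) (cls V (E - {g,h}) p) * edges_in (E - {g,h}) (cls V (E - {g,h}) s)"
proof -
  obtain p q r s where o: "g = {p,q}" "h = {r,s}" "p \<in> V" "q \<in> V" "r \<in> V" "s \<in> V"
     "conn (E - {g,h}) q r" "\<not> conn (E - {g}) p q" "\<not> conn (E - {h}) r s"
     "\<forall>x\<in>V. conn (E - {g,h}) p x \<or> conn (E - {g,h}) q x \<or> conn (E - {g,h}) s x"
     "\<not> conn (E - {g,h}) p q" "\<not> conn (E - {g,h}) r s" "\<not> conn (E - {g,h}) p s"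
     "\<not> conn (E - {g,h}) q s"
    using orient_full[OF assms] by blast
  define F where "F = E - {g,h}"
  let ?P = "cls V F p" let ?Q = "cls V F q" let ?S = "cls V F s"
  have comp: "components V F = {?P, ?Q, ?S}"
  proof -
    have "cls V F u \<in> {?P, ?Q, ?S}" if u: "u \<in> V" for u
    proof -
      have "conn F p u \<or> conn F q u \<or> conn F s u" using o(10) u unfolding F_def by blast
      thus ?thesis using cls_eq[of F p u V] cls_eq[of F q u V] cls_eq[of F s u V] by auto
    qed
    moreover have "?P \<in> {cls V F u | u. u \<in> V}" "?Q \<in> {cls V F u | u. u \<in> V}"
      "?S \<in> {cls V F u | u. u \<in> V}" using o(3,4,6) by auto
    ultimately show ?thesis unfolding components_cls by blast
  qed
  have inP: "p \<in> ?P" and inQ: "q \<in> ?Q" "r \<in> ?Q" and inS: "s \<in> ?S"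
    using o(3,4,5,6,7) unfolding cls_def F_def by auto
  have nP: "q \<notin> ?P" "s \<notin> ?P" "r \<notin> ?P"
  proof -
    show "q \<notin> ?P" using o(11) unfolding cls_def F_def by simp
    show "s \<notin> ?P" using o(13) unfolding cls_def F_def by simp
    have "\<not> conn F p r" using o(7) o(11) conn_sym conn_trans unfolding F_def by metis
    thus "r \<notin> ?P" unfolding cls_def by simp
  qed
  have nS: "s \<notin> ?Q" "p \<notin> ?S" "q \<notin> ?S"
  proof -
    show "s \<notin> ?Q" using o(14) unfolding cls_def F_def by simp
    show "p \<notin> ?S" using o(13) conn_sym[of "E - {g,h}" s p] unfolding cls_def F_def by blast
    show "q \<notin> ?S" using o(14) conn_sym[of "E - {g,h}" s q] unfolding cls_def F_def by blast
  qed
  have d1: "?P \<noteq> ?Q" using inQ(1) nP(1) by blast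
  have d2: "?P \<noteq> ?S" using inS nP(2) by blast
  have d3: "?Q \<noteq> ?S" using inS nS(1) by blast
  have c3: "card (components V F) = 3" using comp d1 d2 d3 by simp
  have mid: "middle_components V E g h = {?Q}"
  proof -
    have a: "?Q \<inter> g \<noteq> {}" "?Q \<inter> h \<noteq> {}" using inQ o(1,2) by auto
    have b: "?P \<inter> h = {}" using nP(2,3) o(2) by auto
    have c: "?S \<inter> g = {}" using nS(2,3) o(1) by auto
    have "middle_components V E g h = {C \<in> {?P, ?Q, ?S}. C \<inter> g \<noteq> {} \<and> C \<inter> h \<noteq> {}}"
      unfolding middle_components_def using comp F_def by simp
    also have "\<dots> = {?Q}" using a b c by auto
    finally show ?thesis .
  qed
  have "components V F - middle_components V E g h = {?P, ?S}"
    using comp mid d1 d3 by auto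
  hence m: "m12 V E g h = edges_in F ?P * edges_in F ?S"
    unfolding m12_def using d2 F_def by simp
  show ?thesis
    apply (rule exI[of _ p], rule exI[of _ q], rule exI[of _ r], rule exI[of _ s])
    using o c3 mid m unfolding F_def by auto
qed

definition econn :: "'a set set \<Rightarrow> 'a set \<Rightarrow> 'a set \<Rightarrow> bool" where
  "econn F e f \<longleftrightarrow> (\<exists>x\<in>e. \<exists>y\<in>f. conn F x y)"

definition sep :: "'a set set \<Rightarrow> 'a set \<Rightarrow> 'a set \<Rightarrow> 'a set set" where
  "sep E e f = {h \<in> E. h \<noteq> e \<and> h \<noteq> f \<and> \<not> econn (E - {h}) e f}"

lemma sep_sub: "sep E e f \<subseteq> E" by (auto simp: sep_def)

lemma sep_meet: "e \<inter> f \<noteq> {} \<Longrightarrow> sep E e f = {}"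
  unfolding sep_def econn_def by (auto intro: conn_refl)

lemma sep_tri:
  assumes T: "tree V E" and g: "g \<in> E" and gf: "g \<inter> f \<noteq> {}"
  shows "sep E e f \<subseteq> insert g (sep E e g)"
proof
  fix h assume h: "h \<in> sep E e f"
  show "h \<in> insert g (sep E e g)"
  proof (cases "h = g")
    case True then show ?thesis by simp
  next
    case False
    have "\<not> econn (E - {h}) e g"
    proof
      assume "econn (E - {h}) e g"
      then obtain x y where xy: "x \<in> e" "y \<in> g" "conn (E - {h}) x y" unfolding econn_def by blast
      obtain z where z: "z \<in> g" "z \<in> f" using gf by blast
      have "conn (E - {h}) y z" using edge_conn_all[OF T, of "E - {h}" g y z] g False xy z by auto
      hence "conn (E - {h}) x z" using xy conn_trans by metis
      hence "econn (E - {h}) e f" using xy z unfolding econn_def by blast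
      thus False using h unfolding sep_def by blast
    qed
    then show ?thesis using h False unfolding sep_def by blast
  qed
qed

lemma walk_lower:
  assumes T: "tree V E" and fin: "finite E"
  shows "(e, f) \<in> (line_adj E) ^^ n \<Longrightarrow> e \<noteq> f \<Longrightarrow> card (sep E e f) + 1 \<le> n"
proof (induction n arbitrary: f)
  case 0 then show ?case by simp
next
  case (Suc n)
  then obtain g where g: "(e, g) \<in> (line_adj E) ^^ n" "(g, f) \<in> line_adj E" by auto
  have gf: "g \<in> E" "g \<inter> f \<noteq> {}" using g(2) unfolding line_adj_def by auto
  show ?case
  proof (cases "e = g")
    case True
    then show ?thesis using sep_meet[OF gf(2)] by simp
  next
    case False
    have "card (sep E e g) + 1 \<le> n" using Suc.IH[OF g(1) False] .
    moreover have "card (sep E e f) \<le> card (insert g (sep E e g))"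
      using sep_tri[OF T gf] by (intro card_mono) (use fin sep_sub[of E e g] finite_subset in auto)
    moreover have "card (insert g (sep E e g)) \<le> card (sep E e g) + 1"
      by (simp add: card_insert_le_m1 card_insert_if)
    ultimately show ?thesis by linarith
  qed
qed

lemma first_step:
  assumes "finite F" "conn F q r" "q \<noteq> r"
  shows "\<exists>w. {q,w} \<in> F \<and> conn (F - {{q,w}}) w r"
  using assms
proof (induction "card F" arbitrary: F rule: less_induct)
  case less
  from less.prems(2,3) obtain w where w: "(q,w) \<in> adj_rel F" "conn F w r"
    unfolding conn_def by (metis converse_rtranclE)
  have qw: "{q,w} \<in> F" using w(1) by (simp add: adj_rel_def)
  from conn_split[OF w(2), of "{q,w}"]
  show ?case
  proof (elim disjE exE conjE)
    assume "conn (F - {{q,w}}) w r" then show ?thesis using qw by blast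
  next
    fix a b assume ab: "{q,w} = {a,b}" "conn (F - {{q, w}}) w a" "conn (F - {{q, w}}) b r"
    have "b = w \<or> b = q" using ab(1) by (auto simp: doubleton_eq_iff)
    then show ?thesis
    proof
      assume "b = w" then show ?thesis using ab qw by blast
    next
      assume "b = q"
      hence c: "conn (F - {{q,w}}) q r" using ab by simp
      have "card (F - {{q,w}}) < card F" using qw less.prems(1) by (meson card_Diff1_less)
      from less.hyps[OF this _ c less.prems(3)] less.prems(1)
      obtain w' where w': "{q,w'} \<in> F - {{q,w}}" "conn (F - {{q,w}} - {{q,w'}}) w' r" by auto
      have "conn (F - {{q,w'}}) w' r" using w'(2) conn_mono[of "F - {{q,w}} - {{q,w'}}" "F - {{q,w'}}"] by auto
      then show ?thesis using w'(1) by blast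
    qed
  qed
qed

lemma walk_upper:
  assumes T: "tree V E" and fin: "finite E"
  shows "e \<in> E \<Longrightarrow> f \<in> E \<Longrightarrow> e \<noteq> f \<Longrightarrow>
    \<exists>n. (e, f) \<in> (line_adj E) ^^ n \<and> n \<le> card (sep E e f) + 1"
proof (induction "card (sep E e f)" arbitrary: e rule: less_induct)
  case less
  show ?case
  proof (cases "e \<inter> f = {}")
    case False
    hence "(e, f) \<in> (line_adj E) ^^ 1" using less.prems unfolding line_adj_def by auto
    then show ?thesis by (intro exI[of _ 1]) simp
  next
    case True
    obtain p q r s where o: "e = {p,q}" "f = {r,s}" "conn (E - {e,f}) q r"
      "\<not> conn (E - {e}) p q"
      using orient[OF T less.prems] by blast
    have qr: "q \<noteq> r" using True o by auto
    have finF: "finite (E - {e} - {f})" using fin by simp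
    have EE: "E - {e} - {f} = E - {e,f}" by auto
    obtain w where w: "{q,w} \<in> E - {e} - {f}" "conn (E - {e} - {f} - {{q,w}}) w r"
      using first_step[OF finF _ qr] o(3) EE by auto
    define g where "g = {q,w}"
    have gE: "g \<in> E" "g \<noteq> e" "g \<noteq> f" using w(1) g_def by auto
    have wr: "conn (E - {g}) w r" "conn (E - {e}) w r"
      using w(2) conn_mono[of "E - {e} - {f} - {{q,w}}" "E - {{q,w}}" w r]
        conn_mono[of "E - {e} - {f} - {{q,w}}" "E - {e}" w r] unfolding g_def by auto
    have cutg: "\<not> conn (E - {g}) q w" using cut_disc[OF T] gE(1) unfolding g_def by auto
    have eg: "(e, g) \<in> line_adj E" using less.prems gE o(1) g_def unfolding line_adj_def by auto
    have gsep: "g \<in> sep E e f"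
    proof -
      have "\<not> econn (E - {g}) e f"
      proof
        assume "econn (E - {g}) e f"
        then obtain x y where xy: "x \<in> e" "y \<in> f" "conn (E - {g}) x y" unfolding econn_def by blast
        have "conn (E - {g}) q x" using edge_conn_all[OF T, of "E - {g}" e q x] xy gE less.prems o by auto
        moreover have "conn (E - {g}) y r" using edge_conn_all[OF T, of "E - {g}" f y r] xy gE less.prems o by auto
        moreover have "conn (E - {g}) r w" using conn_sym[OF wr(1)] .
        ultimately have "conn (E - {g}) q w" using xy(3) conn_trans by metis
        thus False using cutg by simp
      qed
      thus ?thesis using gE unfolding sep_def by auto
    qed
    have sub: "sep E g f \<subseteq> sep E e f - {g}"
    proof
      fix h assume h: "h \<in> sep E g f"
      hence hh: "h \<in> E" "h \<noteq> g" "h \<noteq> f" "\<not> econn (E - {h}) g f" unfolding sep_def by auto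
      have he: "h \<noteq> e"
      proof
        assume "h = e"
        hence "econn (E - {h}) g f" using wr(2) o(2) g_def unfolding econn_def by auto
        thus False using hh by simp
      qed
      have "\<not> econn (E - {h}) e f"
      proof
        assume "econn (E - {h}) e f"
        then obtain x y where xy: "x \<in> e" "y \<in> f" "conn (E - {h}) x y" unfolding econn_def by blast
        have "conn (E - {h}) w q" using edge_conn_all[OF T, of "E - {h}" g w q] hh gE g_def by auto
        moreover have "conn (E - {h}) q x" using edge_conn_all[OF T, of "E - {h}" e q x] xy he less.prems o by auto
        ultimately have "conn (E - {h}) w y" using xy(3) conn_trans by metis
        hence "econn (E - {h}) g f" using xy g_def unfolding econn_def by auto
        thus False using hh by simp
      qed
      thus "h \<in> sep E e f - {g}" using hh he unfolding sep_def by auto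
    qed
    have finS: "finite (sep E e f)" using fin sep_sub finite_subset by metis
    have lt: "card (sep E g f) < card (sep E e f)"
    proof -
      have "card (sep E g f) \<le> card (sep E e f - {g})" using sub finS by (intro card_mono) auto
      also have "\<dots> < card (sep E e f)" using gsep finS by (meson card_Diff1_less)
      finally show ?thesis .
    qed
    obtain n where n: "(g, f) \<in> (line_adj E) ^^ n" "n \<le> card (sep E g f) + 1"
      using less.hyps[OF lt gE(1) less.prems(2) gE(3)] by blast
    have "(e, f) \<in> (line_adj E) ^^ Suc n" using eg n(1) by (rule relpow_Suc_I2)
    moreover have "Suc n \<le> card (sep E e f) + 1" using n(2) lt by simp
    ultimately show ?thesis by blast
  qed
qed

lemma edge_dist_sep:
  assumes T: "tree V E" and fin: "finite E" and e: "e \<in> E" and f: "f \<in> E" and ef: "e \<noteq> f"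
  shows "edge_dist E e f = card (sep E e f) + 1"
proof -
  obtain n where n: "(e, f) \<in> (line_adj E) ^^ n" "n \<le> card (sep E e f) + 1"
    using walk_upper[OF T fin e f ef] by blast
  have "card (sep E e f) + 1 \<le> n" using walk_lower[OF T fin n(1) ef] .
  hence nn: "n = card (sep E e f) + 1" using n(2) by simp
  show ?thesis unfolding edge_dist_def
  proof (rule Least_equality)
    show "(e, f) \<in> line_adj E ^^ (card (sep E e f) + 1)" using n(1) nn by simp
  next
    fix k assume "(e, f) \<in> line_adj E ^^ k"
    thus "card (sep E e f) + 1 \<le> k" using walk_lower[OF T fin _ ef] by blast
  qed
qed

lemma econn_sym: "econn G e f \<Longrightarrow> econn G f e"
proof -
  assume "econn G e f"
  then obtain x y where "x \<in> e" "y \<in> f" "conn G x y" unfolding econn_def by blast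
  thus ?thesis using conn_sym[of G x y] unfolding econn_def by blast
qed

lemma sep_sym: "sep E e f = sep E f e"
proof -
  have "h \<in> sep E e f \<longleftrightarrow> h \<in> sep E f e" for h
    unfolding sep_def using econn_sym[of "E - {h}" e f] econn_sym[of "E - {h}" f e] by auto
  thus ?thesis by (rule set_eqI)
qed

lemma edge_in_cls:
  assumes T: "tree V E" and F: "F \<subseteq> E" and e: "e \<in> F" and x: "x \<in> e" and u: "conn F u x"
  shows "e \<subseteq> cls V F u"
proof
  fix z assume z: "z \<in> e"
  have "conn F x z" using edge_conn_all[OF T F e x z] .
  moreover have "e \<in> E" using e F by blast
  hence "z \<in> V" using tree_edge_sub[OF T] z by blast
  ultimately show "z \<in> cls V F u" using conn_trans[OF u] unfolding cls_def by blast
qed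

lemma count_pair:
  assumes T: "tree V E" and fin: "finite E" and g: "g \<in> E" and h: "h \<in> E" and gh: "g \<noteq> h"
  shows "card {x \<in> edge_pairs E. g \<in> sep E (fst x) (snd x) \<and> h \<in> sep E (fst x) (snd x)}
           = 2 * m12 V E g h"
proof -
  obtain p q r s where o: "g = {p,q}" "h = {r,s}" "p \<in> V" "q \<in> V" "r \<in> V" "s \<in> V"
     "conn (E - {g,h}) q r" "\<not> conn (E - {g}) p q" "\<not> conn (E - {h}) r s"
     "\<forall>x\<in>V. conn (E - {g,h}) p x \<or> conn (E - {g,h}) q x \<or> conn (E - {g,h}) s x"
     "\<not> conn (E - {g,h}) p q" "\<not> conn (E - {g,h}) r s" "\<not> conn (E - {g,h}) p s"
     "\<not> conn (E - {g,h}) q s"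
     "m12 V E g h = edges_in (E - {g,h}) (cls V (E - {g,h}) p) * edges_in (E - {g,h}) (cls V (E - {g,h}) s)"
    using three_struct[OF assms(1,3,4,5)] apply (elim exE conjE) by (rule that) assumption+
  define F where "F = E - {g,h}"
  have FE: "F \<subseteq> E" and Fg: "F \<subseteq> E - {g}" and Fh: "F \<subseteq> E - {h}" unfolding F_def by auto
  define A where "A = {x \<in> F. x \<subseteq> cls V F p}"
  define B where "B = {x \<in> F. x \<subseteq> cls V F s}"
  have m: "m12 V E g h = card A * card B" using o(15) unfolding A_def B_def edges_in_def F_def[symmetric] .
  have "{p,q} \<in> E - {h}" using g gh o(1) by simp
  hence pq_h: "conn (E - {h}) p q" by (rule conn_edge)
  have "{r,s} \<in> E - {g}" using h gh o(2) by simp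
  hence rs_g: "conn (E - {g}) r s" by (rule conn_edge)
  have qr_g: "conn (E - {g}) q r" using conn_mono[OF Fg] o(7) unfolding F_def by blast
  have qr_h: "conn (E - {h}) q r" using conn_mono[OF Fh] o(7) unfolding F_def by blast
  have ne: "\<exists>a. a \<in> x" if xE: "x \<in> E" for x
  proof -
    obtain u v where "x = {u,v}" using tree_edge[OF T xE] by blast
    thus ?thesis by blast
  qed
  have inV: "x \<subseteq> V" if "x \<in> E" for x using tree_edge_sub[OF T that] .
  have disj: "A \<inter> B = {}"
  proof (rule ccontr)
    assume "A \<inter> B \<noteq> {}"
    then obtain x where x: "x \<in> A" "x \<in> B" by blast
    then obtain a where a: "a \<in> x" using ne FE unfolding A_def by blast
    hence "conn F p a" "conn F s a" using x unfolding A_def B_def cls_def by auto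
    hence "conn F p s" using conn_sym conn_trans by metis
    thus False using o(13) unfolding F_def by simp
  qed
  have AB: "e \<noteq> f \<and> g \<in> sep E e f \<and> h \<in> sep E e f" if e: "e \<in> A" and f: "f \<in> B" for e f
  proof -
    have eF: "e \<in> F" "e \<subseteq> cls V F p" and fF: "f \<in> F" "f \<subseteq> cls V F s"
      using e f unfolding A_def B_def by auto
    have "e \<noteq> f" using e f disj by blast
    moreover have "\<not> econn (E - {g}) e f"
    proof
      assume "econn (E - {g}) e f"
      then obtain x y where xy: "x \<in> e" "y \<in> f" "conn (E - {g}) x y" unfolding econn_def by blast
      have "conn F p x" using eF xy unfolding cls_def by blast
      hence "conn (E - {g}) p x" using conn_mono[OF Fg] by blast
      moreover have "conn (E - {g}) y s"
      proof -
        have "conn F s y" using fF xy unfolding cls_def by blast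
        thus ?thesis using conn_mono[OF Fg] conn_sym[of "E - {g}" s y] by blast
      qed
      ultimately have "conn (E - {g}) p q" using xy(3) rs_g qr_g conn_sym conn_trans by metis
      thus False using o(8) by simp
    qed
    moreover have "\<not> econn (E - {h}) e f"
    proof
      assume "econn (E - {h}) e f"
      then obtain x y where xy: "x \<in> e" "y \<in> f" "conn (E - {h}) x y" unfolding econn_def by blast
      have "conn F p x" using eF xy unfolding cls_def by blast
      hence "conn (E - {h}) p x" using conn_mono[OF Fh] by blast
      moreover have "conn (E - {h}) y s"
      proof -
        have "conn F s y" using fF xy unfolding cls_def by blast
        thus ?thesis using conn_mono[OF Fh] conn_sym[of "E - {h}" s y] by blast
      qed
      ultimately have "conn (E - {h}) r s" using xy(3) pq_h qr_h conn_sym conn_trans by metis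
      thus False using o(9) by simp
    qed
    moreover have "e \<noteq> g" "e \<noteq> h" "f \<noteq> g" "f \<noteq> h" using eF fF unfolding F_def by auto
    ultimately show ?thesis using g h unfolding sep_def by auto
  qed
  have set_eq: "{x \<in> edge_pairs E. g \<in> sep E (fst x) (snd x) \<and> h \<in> sep E (fst x) (snd x)}
       = A \<times> B \<union> B \<times> A"
  proof (rule set_eqI, rule iffI)
    fix x assume "x \<in> A \<times> B \<union> B \<times> A"
    then obtain e f where x: "x = (e,f)" and ef: "(e \<in> A \<and> f \<in> B) \<or> (e \<in> B \<and> f \<in> A)" by auto
    have "e \<in> E" "f \<in> E" using ef FE unfolding A_def B_def by auto
    moreover have "e \<noteq> f \<and> g \<in> sep E e f \<and> h \<in> sep E e f"
      using ef AB[of e f] AB[of f e] sep_sym[of E e f] by auto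
    ultimately show "x \<in> {x \<in> edge_pairs E. g \<in> sep E (fst x) (snd x) \<and> h \<in> sep E (fst x) (snd x)}"
      using x unfolding edge_pairs_def by auto
  next
    fix x assume xm: "x \<in> {x \<in> edge_pairs E. g \<in> sep E (fst x) (snd x) \<and> h \<in> sep E (fst x) (snd x)}"
    obtain e f where x: "x = (e,f)" by (cases x)
    have ef: "e \<in> E" "f \<in> E" "e \<noteq> f"
      and gs: "g \<in> sep E e f" and hs: "h \<in> sep E e f" using xm unfolding x edge_pairs_def by auto
    have gs': "g \<noteq> e" "g \<noteq> f" "\<not> econn (E - {g}) e f" using gs unfolding sep_def by blast+
    have hs': "h \<noteq> e" "h \<noteq> f" "\<not> econn (E - {h}) e f" using hs unfolding sep_def by blast+
    have eF: "e \<in> F" "f \<in> F" using gs' hs' ef unfolding F_def by auto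
    have ng: "\<not> econn (E - {g}) e f" and nh: "\<not> econn (E - {h}) e f" using gs' hs' by auto
    obtain a where a: "a \<in> e" using ne[OF ef(1)] by blast
    obtain b where b: "b \<in> f" using ne[OF ef(2)] by blast
    have ab: "a \<in> e" "b \<in> f" using a b .
    have abV: "a \<in> V" "b \<in> V" using inV[OF ef(1)] inV[OF ef(2)] a b by auto
    have X: "econn G e f" if "conn G u a" "conn G v b" "conn G u v" for G u v
    proof -
      have "conn G a b" using conn_trans[OF conn_trans[OF conn_sym[OF that(1)] that(3)] that(2)] .
      thus ?thesis using ab unfolding econn_def by blast
    qed
    have ca: "conn F p a \<or> conn F q a \<or> conn F s a" using bspec[OF o(10) abV(1)] unfolding F_def .
    have cb: "conn F p b \<or> conn F q b \<or> conn F s b" using bspec[OF o(10) abV(2)] unfolding F_def .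
    have XG: False if "conn F u a" "conn F v b" "conn (E - {g}) u v" for u v
    proof -
      have "econn (E - {g}) e f" using X[OF conn_mono[OF Fg that(1)] conn_mono[OF Fg that(2)] that(3)] .
      thus False using ng by simp
    qed
    have XH: False if "conn F u a" "conn F v b" "conn (E - {h}) u v" for u v
    proof -
      have "econn (E - {h}) e f" using X[OF conn_mono[OF Fh that(1)] conn_mono[OF Fh that(2)] that(3)] .
      thus False using nh by simp
    qed
    have same: False if "conn F u a" "conn F u b" for u
      using XG[OF that conn_refl] .
    have "(conn F p a \<and> conn F s b) \<or> (conn F s a \<and> conn F p b)"
    proof -
      have k1: False if "conn F q a" "conn F p b"
        using XH[OF that conn_sym[OF pq_h]] .
      have k2: False if "conn F p a" "conn F q b"
        using XH[OF that pq_h] .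
      have qs: "conn (E - {g}) q s" using conn_trans[OF qr_g rs_g] .
      have k3: False if "conn F q a" "conn F s b"
        using XG[OF that qs] .
      have k4: False if "conn F s a" "conn F q b"
        using XG[OF that conn_sym[OF qs]] .
      from ca show ?thesis
      proof (elim disjE)
        assume a1: "conn F p a"
        from cb show ?thesis
        proof (elim disjE)
          assume "conn F p b" thus ?thesis using same[OF a1] by simp
        next
          assume "conn F q b" thus ?thesis using k2[OF a1] by simp
        next
          assume "conn F s b" thus ?thesis using a1 by simp
        qed
      next
        assume a1: "conn F q a"
        from cb show ?thesis
        proof (elim disjE)
          assume "conn F p b" thus ?thesis using k1[OF a1] by simp
        next
          assume "conn F q b" thus ?thesis using same[OF a1] by simp
        next
          assume "conn F s b" thus ?thesis using k3[OF a1] by simp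
        qed
      next
        assume a1: "conn F s a"
        from cb show ?thesis
        proof (elim disjE)
          assume "conn F p b" thus ?thesis using a1 by simp
        next
          assume "conn F q b" thus ?thesis using k4[OF a1] by simp
        next
          assume "conn F s b" thus ?thesis using same[OF a1] by simp
        qed
      qed
    qed
    thus "x \<in> A \<times> B \<union> B \<times> A"
    proof (elim disjE conjE)
      assume "conn F p a" "conn F s b"
      note c = this
      have e1: "e \<subseteq> cls V F p" using edge_in_cls[OF T FE eF(1) ab(1) c(1)] .
      have f1: "f \<subseteq> cls V F s" using edge_in_cls[OF T FE eF(2) ab(2) c(2)] .
      have "e \<in> A" using eF(1) e1 unfolding A_def by simp
      moreover have "f \<in> B" using eF(2) f1 unfolding B_def by simp
      ultimately show ?thesis unfolding x by blast
    next
      assume "conn F s a" "conn F p b"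
      note c = this
      have e1: "e \<subseteq> cls V F s" using edge_in_cls[OF T FE eF(1) ab(1) c(1)] .
      have f1: "f \<subseteq> cls V F p" using edge_in_cls[OF T FE eF(2) ab(2) c(2)] .
      have "e \<in> B" using eF(1) e1 unfolding B_def by simp
      moreover have "f \<in> A" using eF(2) f1 unfolding A_def by simp
      ultimately show ?thesis unfolding x by blast
    qed
  qed
  have finF: "finite F" using fin unfolding F_def by simp
  have finA: "finite A" "finite B"
    using finite_subset[OF _ finF, of A] finite_subset[OF _ finF, of B] unfolding A_def B_def by blast+
  have dj: "(A \<times> B) \<inter> (B \<times> A) = {}" using disj by blast
  have "card (A \<times> B \<union> B \<times> A) = card (A \<times> B) + card (B \<times> A)"
    using card_Un_disjoint[OF finite_cartesian_product[OF finA] finite_cartesian_product[OF finA(2,1)] dj] .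
  also have "\<dots> = 2 * (card A * card B)" by (simp add: card_cartesian_product)
  finally have "card (A \<times> B \<union> B \<times> A) = 2 * m12 V E g h" using m by simp
  thus ?thesis by (subst set_eq)
qed

lemma card_offdiag:
  assumes fin: "finite S"
  shows "card {(a,b). a \<in> S \<and> b \<in> S \<and> a \<noteq> b} = card S * card S - card S"
proof -
  have eq: "{(a,b). a \<in> S \<and> b \<in> S \<and> a \<noteq> b} = S \<times> S - (\<lambda>a. (a,a)) ` S" by auto
  have c: "card ((\<lambda>a. (a,a)) ` S) = card S" by (rule card_image) (auto simp: inj_on_def)
  have sub: "(\<lambda>a. (a,a)) ` S \<subseteq> S \<times> S" by auto
  show ?thesis unfolding eq using card_Diff_subset[OF finite_imageI[OF fin] sub] c
    by (simp add: card_cartesian_product)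
qed

lemma card_filter_sum:
  assumes "finite A"
  shows "card {y \<in> A. P y} = (\<Sum>y\<in>A. if P y then 1 else 0::nat)"
proof -
  have "(\<Sum>y\<in>A. if P y then 1 else 0::nat) = (\<Sum>y\<in>{y \<in> A. P y}. 1)"
    using sum.inter_filter[OF assms, of "\<lambda>_. 1::nat" P] by simp
  thus ?thesis by simp
qed

lemma finite_edge_pairs: "finite E \<Longrightarrow> finite (edge_pairs E)"
  by (rule finite_subset[of _ "E \<times> E"]) (auto simp: edge_pairs_def)

lemma key_sum:
  assumes T: "tree V E" and fin: "finite E"
  shows "(\<Sum>x\<in>edge_pairs E. card (sep E (fst x) (snd x)) * card (sep E (fst x) (snd x)) - card (sep E (fst x) (snd x)))
        = (\<Sum>y\<in>edge_pairs E. 2 * m12 V E (fst y) (snd y))"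
proof -
  define P where "P = (\<lambda>x y. fst y \<in> sep E (fst x) (snd x) \<and> snd y \<in> sep E (fst x) (snd x))"
  have finEP: "finite (edge_pairs E)" using finite_edge_pairs[OF fin] .
  have 1: "card {y \<in> edge_pairs E. P x y}
        = card (sep E (fst x) (snd x)) * card (sep E (fst x) (snd x)) - card (sep E (fst x) (snd x))" for x
  proof -
    have "{y \<in> edge_pairs E. P x y} = {(a,b). a \<in> sep E (fst x) (snd x) \<and> b \<in> sep E (fst x) (snd x) \<and> a \<noteq> b}"
      using sep_sub[of E "fst x" "snd x"] unfolding P_def edge_pairs_def by auto
    thus ?thesis using card_offdiag[of "sep E (fst x) (snd x)"] finite_subset[OF sep_sub fin] by simp
  qed
  have 2: "card {x \<in> edge_pairs E. P x y} = 2 * m12 V E (fst y) (snd y)" if y: "y \<in> edge_pairs E" for y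
  proof -
    have "fst y \<in> E" "snd y \<in> E" "fst y \<noteq> snd y" using y unfolding edge_pairs_def by auto
    from count_pair[OF T fin this] show ?thesis unfolding P_def .
  qed
  have "(\<Sum>x\<in>edge_pairs E. card (sep E (fst x) (snd x)) * card (sep E (fst x) (snd x)) - card (sep E (fst x) (snd x)))
      = (\<Sum>x\<in>edge_pairs E. card {y \<in> edge_pairs E. P x y})" using 1 by simp
  also have "\<dots> = (\<Sum>x\<in>edge_pairs E. \<Sum>y\<in>edge_pairs E. if P x y then 1 else 0)"
    using card_filter_sum[OF finEP] by simp
  also have "\<dots> = (\<Sum>y\<in>edge_pairs E. \<Sum>x\<in>edge_pairs E. if P x y then 1 else 0)"
    by (rule sum.swap)
  also have "\<dots> = (\<Sum>y\<in>edge_pairs E. card {x \<in> edge_pairs E. P x y})"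
    using card_filter_sum[OF finEP] by simp
  also have "\<dots> = (\<Sum>y\<in>edge_pairs E. 2 * m12 V E (fst y) (snd y))"
    using 2 by (rule sum.cong[OF refl])
  finally show ?thesis .
qed

lemma m12_sym: "m12 V E g h = m12 V E h g"
proof -
  have a: "{g,h} = {h,g}" by auto
  have b: "middle_components V E g h = middle_components V E h g"
    unfolding middle_components_def a by blast
  show ?thesis unfolding m12_def a b ..
qed

lemma pair_sum:
  fixes f :: "'a set \<Rightarrow> 'a set \<Rightarrow> nat" and m :: nat
  assumes bij: "bij_betw ed {1..m} E" and sym: "\<And>g h. f g h = f h g"
  shows "(\<Sum>y\<in>edge_pairs E. f (fst y) (snd y)) = 2 * (\<Sum>k=1..m-1. \<Sum>l=k+1..m. f (ed k) (ed l))"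
proof -
  define K where "K = {(k,l). k \<in> {1..m} \<and> l \<in> {1..m} \<and> k \<noteq> l}"
  define K1 where "K1 = {(k,l). 1 \<le> k \<and> k < l \<and> l \<le> (m::nat)}"
  define K2 where "K2 = {(k,l). 1 \<le> l \<and> l < k \<and> k \<le> (m::nat)}"
  define \<phi> where "\<phi> = (\<lambda>x. (ed (fst x), ed (snd x)))"
  have inj: "inj_on ed {1..m}" using bij by (simp add: bij_betw_def)
  have img: "ed ` {1..m} = E" using bij by (simp add: bij_betw_def)
  have EP: "edge_pairs E = \<phi> ` K"
  proof (rule set_eqI, rule iffI)
    fix y assume "y \<in> edge_pairs E"
    then obtain a b where y: "y = (a,b)" "a \<in> E" "b \<in> E" "a \<noteq> b" unfolding edge_pairs_def by auto
    obtain k where k: "k \<in> {1..m}" "ed k = a" using y(2) img by blast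
    obtain l where l: "l \<in> {1..m}" "ed l = b" using y(3) img by blast
    have "(k,l) \<in> K" using k l y(4) unfolding K_def by auto
    thus "y \<in> \<phi> ` K" using k l y(1) unfolding \<phi>_def by force
  next
    fix y assume "y \<in> \<phi> ` K"
    then obtain k l where y: "y = (ed k, ed l)" "k \<in> {1..m}" "l \<in> {1..m}" "k \<noteq> l"
      unfolding \<phi>_def K_def by auto
    have "ed k \<noteq> ed l" using inj y by (meson inj_on_contraD)
    thus "y \<in> edge_pairs E" using y img unfolding edge_pairs_def by auto
  qed
  have injphi: "inj_on \<phi> K"
  proof (rule inj_onI)
    fix x y assume "x \<in> K" "y \<in> K" "\<phi> x = \<phi> y"
    hence a: "fst x \<in> {1..m}" "snd x \<in> {1..m}" "fst y \<in> {1..m}" "snd y \<in> {1..m}"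
      and b: "ed (fst x) = ed (fst y)" "ed (snd x) = ed (snd y)" unfolding K_def \<phi>_def by auto
    have "fst x = fst y" using inj_onD[OF inj b(1) a(1) a(3)] .
    moreover have "snd x = snd y" using inj_onD[OF inj b(2) a(2) a(4)] .
    ultimately show "x = y" by (simp add: prod_eq_iff)
  qed
  have finK1: "finite K1" by (rule finite_subset[of _ "{1..m} \<times> {1..m}"]) (auto simp: K1_def)
  have KU: "K = K1 \<union> K2" unfolding K_def K1_def K2_def by auto
  have Kd: "K1 \<inter> K2 = {}" unfolding K1_def K2_def by auto
  have K2s: "K2 = prod.swap ` K1" unfolding K1_def K2_def by force
  have finK2: "finite K2" using K2s finK1 by simp
  define F where "F = (\<lambda>x. f (ed (fst x)) (ed (snd x)))"
  have "(\<Sum>y\<in>edge_pairs E. f (fst y) (snd y)) = (\<Sum>x\<in>K. F x)"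
    unfolding EP F_def \<phi>_def using sum.reindex[OF injphi, of "\<lambda>y. f (fst y) (snd y)"]
    by (simp add: \<phi>_def)
  also have "\<dots> = (\<Sum>x\<in>K1. F x) + (\<Sum>x\<in>K2. F x)"
    unfolding KU using sum.union_disjoint[OF finK1 finK2 Kd] .
  also have "(\<Sum>x\<in>K2. F x) = (\<Sum>x\<in>K1. F x)"
  proof -
    have "(\<Sum>x\<in>K2. F x) = (\<Sum>x\<in>K1. F (prod.swap x))"
      unfolding K2s by (rule sum.reindex_cong[of prod.swap]) (auto simp: inj_on_def)
    also have "\<dots> = (\<Sum>x\<in>K1. F x)" unfolding F_def using sym by simp
    finally show ?thesis .
  qed
  also have "(\<Sum>x\<in>K1. F x) = (\<Sum>k=1..m-1. \<Sum>l=k+1..m. f (ed k) (ed l))"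
  proof -
    have "K1 = Sigma {1..m-1} (\<lambda>k. {k+1..m})" unfolding K1_def by auto
    thus ?thesis unfolding F_def by (simp add: sum.Sigma split_beta)
  qed
  finally show ?thesis by simp
qed

lemma two_choose: "2 * (m choose 2) = m * m - (m::nat)"
proof (induction m)
  case 0 then show ?case by simp
next
  case (Suc m)
  have "Suc m choose 2 = m + (m choose 2)" by (simp add: numeral_2_eq_2)
  hence "2 * (Suc m choose 2) = 2 * m + (m * m - m)" using Suc by simp
  also have "\<dots> = Suc m * Suc m - Suc m" by (cases m) (auto simp: algebra_simps)
  finally show ?case .
qed

theorem mainTheorem4:
  fixes V :: "'a set" and E :: "'a set set" and ed :: "nat \<Rightarrow> 'a set" and m :: nat
  assumes "tree V E"
    and "bij_betw ed {1..m} E"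
  shows "(\<forall>k\<in>{1..m}. \<forall>l\<in>{1..m}. k \<noteq> l \<longrightarrow>
            card (components V (E - {ed k, ed l})) = 3 \<and>
            card (middle_components V E (ed k) (ed l)) = 1)
       \<and> edge_hyper_wiener E =
           2 * edge_wiener E
           + real (\<Sum>k=1..m-1. \<Sum>l=k+1..m. m12 V E (ed k) (ed l))
           - real (m choose 2)"
proof -
  have T: "tree V E" using assms(1) .
  have fin: "finite E" using bij_betw_finite assms(2) by blast
  have cardE: "card E = m" using bij_betw_same_card[OF assms(2)] by simp
  have inj: "inj_on ed {1..m}" and img: "ed ` {1..m} = E" using assms(2) by (simp_all add: bij_betw_def)
  have part1: "\<forall>k\<in>{1..m}. \<forall>l\<in>{1..m}. k \<noteq> l \<longrightarrow>
            card (components V (E - {ed k, ed l})) = 3 \<and>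
            card (middle_components V E (ed k) (ed l)) = 1"
  proof (intro ballI impI)
    fix k l assume k: "k \<in> {1..m}" and l: "l \<in> {1..m}" and kl: "k \<noteq> l"
    have e: "ed k \<in> E" "ed l \<in> E" using k l img by auto
    have ne: "ed k \<noteq> ed l" using inj_on_contraD[OF inj kl k l] .
    from three_struct[OF T e ne] show "card (components V (E - {ed k, ed l})) = 3 \<and>
            card (middle_components V E (ed k) (ed l)) = 1" by blast
  qed
  define EP where "EP = edge_pairs E"
  define s where "s = (\<lambda>x. card (sep E (fst x) (snd x)))"
  define M where "M = (\<Sum>k=1..m-1. \<Sum>l=k+1..m. m12 V E (ed k) (ed l))"
  have finEP: "finite EP" unfolding EP_def using finite_edge_pairs[OF fin] .
  have dist: "edge_dist E (fst x) (snd x) = s x + 1" if x: "x \<in> EP" for x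
  proof -
    have "fst x \<in> E" "snd x \<in> E" "fst x \<noteq> snd x" using x unfolding EP_def edge_pairs_def by auto
    from edge_dist_sep[OF T fin this] show ?thesis unfolding s_def .
  qed
  have S1: "(\<Sum>(e, f)\<in>EP. real (edge_dist E e f)) = (\<Sum>x\<in>EP. real (s x)) + real (card EP)"
  proof -
    have "(\<Sum>(e, f)\<in>EP. real (edge_dist E e f)) = (\<Sum>x\<in>EP. real (s x) + 1)"
      by (rule sum.cong[OF refl]) (simp add: split_beta dist)
    thus ?thesis by (simp add: sum.distrib)
  qed
  have S2: "(\<Sum>(e, f)\<in>EP. real (edge_dist E e f) ^ 2)
      = (\<Sum>x\<in>EP. real (s x) ^ 2) + 2 * (\<Sum>x\<in>EP. real (s x)) + real (card EP)"
  proof -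
    have "(\<Sum>(e, f)\<in>EP. real (edge_dist E e f) ^ 2) = (\<Sum>x\<in>EP. real (s x) ^ 2 + 2 * real (s x) + 1)"
      by (rule sum.cong[OF refl]) (simp add: split_beta dist power2_eq_square algebra_simps)
    thus ?thesis by (simp add: sum.distrib sum_distrib_left)
  qed
  have key: "(\<Sum>x\<in>EP. real (s x) ^ 2) - (\<Sum>x\<in>EP. real (s x)) = 4 * real M"
  proof -
    have n1: "(\<Sum>x\<in>EP. s x * s x - s x) = (\<Sum>y\<in>EP. 2 * m12 V E (fst y) (snd y))"
      using key_sum[OF T fin] unfolding EP_def s_def .
    also have "\<dots> = 2 * (\<Sum>y\<in>EP. m12 V E (fst y) (snd y))" by (simp add: sum_distrib_left)
    also have "(\<Sum>y\<in>EP. m12 V E (fst y) (snd y)) = 2 * M"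
      unfolding EP_def M_def by (rule pair_sum[OF assms(2)]) (rule m12_sym)
    finally have n2: "(\<Sum>x\<in>EP. s x * s x - s x) = 4 * M" by simp
    have "real (\<Sum>x\<in>EP. s x * s x - s x) = (\<Sum>x\<in>EP. real (s x) ^ 2 - real (s x))"
    proof -
      have "real (s x * s x - s x) = real (s x) ^ 2 - real (s x)" for x
      proof -
        have "s x \<le> s x * s x" by (cases "s x") auto
        thus ?thesis by (simp add: of_nat_diff power2_eq_square)
      qed
      thus ?thesis by simp
    qed
    also have "\<dots> = (\<Sum>x\<in>EP. real (s x) ^ 2) - (\<Sum>x\<in>EP. real (s x))" by (rule sum_subtractf)
    finally show ?thesis using n2 by simp
  qed
  have cEP: "real (card EP) = 2 * real (m choose 2)"
  proof -
    have "EP = {(a,b). a \<in> E \<and> b \<in> E \<and> a \<noteq> b}" unfolding EP_def edge_pairs_def ..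
    hence "card EP = m * m - m" using card_offdiag[OF fin] cardE by simp
    also have "\<dots> = 2 * (m choose 2)" using two_choose[of m] by simp
    finally show ?thesis by simp
  qed
  have part2: "edge_hyper_wiener E = 2 * edge_wiener E + real M - real (m choose 2)"
    unfolding edge_hyper_wiener_def edge_wiener_def EP_def[symmetric] S1 S2
    using key cEP by (simp add: field_simps)
  show ?thesis using part1 part2 unfolding M_def by blast
qed

end
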